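(* Let $N, M \ge 1$ be integers, let $t_1,\ldots,t_N$ be real time points and $f_1,\ldots,f_M$ real frequencies, and let $B\in\mathbb{C}^{N\times M}$ have entries $B_{k,m}=\exp(-i2\pi f_m t_k)$. Let $A=\left[\mathbf{1}_N\ \ \mathrm{Re}(B)\ \ \mathrm{Im}(B)\right]\in\mathbb{R}^{N\times(2M+1)}$, where $\mathbf{1}_N$ is the all-ones column vector. Let $\sigma^2>0$, let $\alpha_0,\alpha_1,\ldots,\alpha_M>0$, and let $\Gamma=\mathrm{diag}(\alpha_0,\alpha_1,\ldots,\alpha_M,\alpha_1,\ldots,\alpha_M)$. Let $\Omega=\{1,\ldots,N\}$. For $J\subseteq\Omega$ let $P_J\in\mathbb{R}^{N\times N}$ be the diagonal matrix with $(P_J)_{kk}=1$ if $k\in J$ and $0$ otherwise, and define the set function $f:2^\Omega\to\mathbb{R}$ by $$f(J)=\mathrm{tr}\left(\sigma^2 I_N + A\Gamma A^T\right)-\mathrm{tr}\left(\sigma^2 I_N + A\left(\tfrac{1}{\sigma^2}A^TP_JA+\Gamma^{-1}\right)^{-1}A^T\right).$$ Then $f$ is a weakly submodular set function; that is, $f$ is monotone non-decreasing (i.e. $f(\mathcal{X})\le f(\mathcal{Y})$ whenever $\mathcal{X}\subseteq\mathcal{Y}\subseteq\Omega$) and its weak-submodularity constant $$c_f=\max_{(\mathcal{X},\mathcal{Y},i)\in\tilde\Omega} \frac{f_i(\mathcal{Y})}{f_i(\mathcal{X})},\qquad \tilde\Omega=\{(\mathcal{X},\mathcal{Y},i): \mathcal{X}\subseteq\mathcal{Y}\subset\Omega,\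 i\in\Omega\setminus\mathcal{Y}\},$$ is bounded (a finite real number), where $f_i(\mathcal{X})=f(\mathcal{X}\cup\{i\})-f(\mathcal{X})$.
   Context: $\mathrm{Re}(B)$ and $\mathrm{Im}(B)$ denote entrywise real and imaginary parts, and $\mathrm{tr}$ is the matrix trace. $2^\Omega$ denotes the power set of $\Omega$. The marginal gain of adding $j$ to $\mathcal{X}$ is $f_j(\mathcal{X})=f(\mathcal{X}\cup\{j\})-f(\mathcal{X})$. A monotone non-decreasing set function $f$ is called weakly submodular if its weak-submodularity constant $c_f$ (defined as in the claim) is bounded; it is submodular iff $c_f\le 1$. *)

theory Defs
  imports "HOL-Analysis.Analysis"
begin

text \<open>Time points t indexed by the finite type 'n (N = CARD('n)), frequencies f indexed by
  the finite type 'm (M = CARD('m)). Columns of A are indexed by unit + ('m + 'm):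
  Inl () is the all-ones column, Inr (Inl m) the Re(B) column m, Inr (Inr m) the Im(B) column m.\<close>

definition Bmat :: "('n::finite \<Rightarrow> real) \<Rightarrow> ('m::finite \<Rightarrow> real) \<Rightarrow> complex^'m^'n" where
  "Bmat t fr = (\<chi> k m. exp (- (\<i> * complex_of_real (2 * pi * fr m * t k))))"

definition Amat :: "('n::finite \<Rightarrow> real) \<Rightarrow> ('m::finite \<Rightarrow> real) \<Rightarrow> real^(unit + ('m + 'm))^'n" where
  "Amat t fr = (\<chi> k c. (case c of Inl _ \<Rightarrow> 1
                               | Inr (Inl m) \<Rightarrow> Re (Bmat t fr $ k $ m)
                               | Inr (Inr m) \<Rightarrow> Im (Bmat t fr $ k $ m)))"

definition Gamma :: "real \<Rightarrow> ('m::finite \<Rightarrow> real) \<Rightarrow> real^(unit + ('m + 'm))^(unit + ('m + 'm))" where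
  "Gamma \<alpha>0 \<alpha> = (\<chi> c d. if c = d then (case c of Inl _ \<Rightarrow> \<alpha>0
                                              | Inr (Inl m) \<Rightarrow> \<alpha> m
                                              | Inr (Inr m) \<Rightarrow> \<alpha> m) else 0)"

definition Pmat :: "'n::finite set \<Rightarrow> real^'n^'n" where
  "Pmat J = (\<chi> k l. if k = l \<and> k \<in> J then 1 else 0)"

definition fobj :: "('n::finite \<Rightarrow> real) \<Rightarrow> ('m::finite \<Rightarrow> real) \<Rightarrow> real \<Rightarrow> real \<Rightarrow> ('m \<Rightarrow> real)
                    \<Rightarrow> 'n set \<Rightarrow> real" where
  "fobj t fr \<sigma>2 \<alpha>0 \<alpha> J =
     trace (\<sigma>2 *\<^sub>R mat 1 + Amat t fr ** Gamma \<alpha>0 \<alpha> ** transpose (Amat t fr))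
   - trace (\<sigma>2 *\<^sub>R mat 1 + Amat t fr **
        matrix_inv ((1 / \<sigma>2) *\<^sub>R (transpose (Amat t fr) ** Pmat J ** Amat t fr)
                    + matrix_inv (Gamma \<alpha>0 \<alpha>)) ** transpose (Amat t fr))"

definition marginal :: "('a set \<Rightarrow> real) \<Rightarrow> 'a \<Rightarrow> 'a set \<Rightarrow> real" where
  "marginal f j X = f (X \<union> {j}) - f X"

definition wsm_triples :: "'a set \<Rightarrow> ('a set \<times> 'a set \<times> 'a) set" where
  "wsm_triples \<Omega> = {(X, Y, i). X \<subseteq> Y \<and> Y \<subset> \<Omega> \<and> i \<in> \<Omega> - Y}"

text \<open>Weakly submodular: monotone non-decreasing on subsets of \<Omega>, and the constant
  c_f = max over triples of f_i(Y)/f_i(X) is a finite real number, i.e. every ratio is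
  defined (denominator nonzero) and the ratios are bounded above.\<close>
definition weakly_submodular :: "'a set \<Rightarrow> ('a set \<Rightarrow> real) \<Rightarrow> bool" where
  "weakly_submodular \<Omega> f \<longleftrightarrow>
     (\<forall>X Y. X \<subseteq> Y \<and> Y \<subseteq> \<Omega> \<longrightarrow> f X \<le> f Y)
   \<and> (\<forall>(X, Y, i) \<in> wsm_triples \<Omega>. marginal f i X \<noteq> 0)
   \<and> (\<exists>c::real. \<forall>(X, Y, i) \<in> wsm_triples \<Omega>. marginal f i Y / marginal f i X \<le> c)"

end

theory Submission
  imports Defs
begin

definition outer :: "real^'a \<Rightarrow> real^'b \<Rightarrow> real^'b^'a" where
  "outer u v = (\<chi> p q. u$p * v$q)"

definition diagm :: "('c::finite \<Rightarrow> real) \<Rightarrow> real^'c^'c" where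
  "diagm g = (\<chi> c d. if c = d then g c else 0)"

lemma inv_unique:
  fixes A B :: "real^'n::finite^'n"
  assumes "A ** B = mat 1" shows "matrix_inv A = B"
proof -
  have BA: "B ** A = mat 1" using assms matrix_left_right_inverse by blast
  have "\<exists>A'. A ** A' = mat 1 \<and> A' ** A = mat 1" using assms BA by blast
  then have h: "A ** matrix_inv A = mat 1 \<and> matrix_inv A ** A = mat 1"
    unfolding matrix_inv_def by (rule someI_ex)
  have "matrix_inv A = matrix_inv A ** (A ** B)" using assms by simp
  also have "\<dots> = B" using h by (simp add: matrix_mul_assoc)
  finally show ?thesis .
qed

lemma matrix_add_rdistrib: "((B + C) ** A) = (B ** A) + (C ** (A::real^'a::finite^'b::finite))"
  by (vector matrix_matrix_mult_def sum.distrib[symmetric] field_simps)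

lemma sdl: "(\<Sum>r\<in>(UNIV::'c::finite set). (if p = r then a r else 0) * b r) = a p * (b p :: real)"
proof -
  have "(\<Sum>r\<in>(UNIV::'c set). (if p = r then a r else 0) * b r) = (\<Sum>r\<in>UNIV. if p = r then a r * b r else 0)"
    by (rule sum.cong) auto
  also have "\<dots> = a p * b p" by simp
  finally show ?thesis .
qed

lemma sdr: "(\<Sum>r\<in>(UNIV::'c::finite set). b r * (if r = q then a r else 0)) = b q * (a q :: real)"
proof -
  have "(\<Sum>r\<in>(UNIV::'c set). b r * (if r = q then a r else 0)) = (\<Sum>r\<in>UNIV. if q = r then b r * a r else 0)"
    by (rule sum.cong) auto
  also have "\<dots> = b q * a q" by simp
  finally show ?thesis .
qed

lemma diagm_mult: "diagm g ** diagm h = diagm (\<lambda>c. g c * h c)"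
  unfolding diagm_def matrix_matrix_mult_def
  by (simp add: vec_eq_iff sdl)

lemma diagm_1: "diagm (\<lambda>c. 1) = mat 1"
  by (simp add: diagm_def mat_def)

lemma diagm_quad: "x \<bullet> (diagm h *v x) = (\<Sum>c\<in>UNIV. h c * (x$c)^2)"
proof -
  have "diagm h *v x = (\<chi> c. h c * x$c)"
    unfolding diagm_def matrix_vector_mult_def by (simp add: vec_eq_iff sdl)
  then show ?thesis by (simp add: inner_vec_def power2_eq_square mult_ac)
qed

lemma diagm_pos:
  assumes "\<forall>c. h c > 0" "x \<noteq> 0" shows "x \<bullet> (diagm h *v x) > 0"
proof -
  obtain c where c: "x$c \<noteq> 0" using assms(2) by (metis vec_eq_iff zero_index)
  have "0 < h c * (x$c)^2" using assms c by simp
  also have "\<dots> \<le> (\<Sum>c\<in>UNIV. h c * (x$c)^2)"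
    by (rule member_le_sum) (use assms in \<open>auto intro!: mult_nonneg_nonneg simp: less_imp_le\<close>)
  finally show ?thesis by (simp add: diagm_quad)
qed

lemma transpose_diagm: "transpose (diagm h) = diagm h"
  by (simp add: diagm_def transpose_def vec_eq_iff)

lemma transpose_entry: "transpose (X::real^'a::finite^'b::finite) $ i $ j = X $ j $ i"
  by (simp add: transpose_def)

lemma Pmat_alt: "Pmat J = (\<chi> k l. if k = l then (if k \<in> J then 1 else 0) else 0)"
  unfolding Pmat_def by (auto simp: vec_eq_iff)

lemma Pmat_vec: "Pmat J *v z = (\<chi> k. if k \<in> J then z$k else 0)"
  unfolding Pmat_alt matrix_vector_mult_def
  by (simp add: vec_eq_iff sdl)

lemma tAP: "transpose A ** Pmat J = (\<chi> p k. if k \<in> J then A$k$p else 0)"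
  unfolding matrix_matrix_mult_def transpose_def Pmat_alt
  by (simp add: vec_eq_iff sdr)

lemma AtPA_entry: "(transpose A ** Pmat J ** A) $ p $ q = (\<Sum>k\<in>J. A$k$p * A$k$q)"
proof -
  have "(transpose A ** Pmat J ** A) $ p $ q = (\<Sum>k\<in>UNIV. (if k \<in> J then A$k$p * A$k$q else 0))"
    by (subst tAP) (auto simp: matrix_matrix_mult_def intro!: sum.cong)
  also have "\<dots> = (\<Sum>k\<in>J. A$k$p * A$k$q)"
    by (simp add: sum.If_cases)
  finally show ?thesis .
qed

lemma Pquad: "z \<bullet> (Pmat J *v z) \<ge> 0"
  unfolding Pmat_vec inner_vec_def
  by (auto intro!: sum_nonneg)

lemma AtPA_quad: "x \<bullet> ((transpose A ** Pmat J ** A) *v x) \<ge> 0"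
proof -
  have "(transpose A ** Pmat J ** A) *v x = transpose A *v (Pmat J *v (A *v x))"
    by (simp add: matrix_vector_mul_assoc matrix_mul_assoc)
  also have "\<dots> = (Pmat J *v (A *v x)) v* A" by simp
  finally have "x \<bullet> ((transpose A ** Pmat J ** A) *v x) = (A *v x) \<bullet> (Pmat J *v (A *v x))"
    by (metis dot_lmul_matrix inner_commute)
  then show ?thesis using Pquad by simp
qed

lemma AtPA_insert: "i \<notin> J \<Longrightarrow> transpose A ** Pmat (insert i J) ** A = transpose A ** Pmat J ** A + outer (A$i) (A$i)"
  by (simp add: vec_eq_iff AtPA_entry outer_def sum.insert)

lemma outer_l: "M ** outer u v = outer (M *v u) v"
  by (simp add: vec_eq_iff outer_def matrix_matrix_mult_def matrix_vector_mult_def sum_distrib_right sum_distrib_left mult_ac)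

lemma outer_r: "outer u v ** M = outer u (v v* M)"
  by (simp add: vec_eq_iff outer_def matrix_matrix_mult_def vector_matrix_mult_def sum_distrib_left mult_ac)

lemma outer_outer: "outer u v ** outer w z = (v \<bullet> w) *\<^sub>R outer u z"
  by (simp add: vec_eq_iff outer_def matrix_matrix_mult_def inner_vec_def sum_distrib_left sum_distrib_right mult_ac)

lemma trace_outer: "trace (outer w w) = w \<bullet> w"
  by (simp add: trace_def outer_def inner_vec_def)

lemma scaleR_mv: "((c::real) *\<^sub>R (A::real^'a::finite^'b::finite)) *v x = c *\<^sub>R (A *v x)"
  by (simp add: vec_eq_iff matrix_vector_mult_def sum_distrib_left mult_ac)

lemma outer_mv: "outer u v *v w = (v \<bullet> w) *\<^sub>R u"
  by (simp add: vec_eq_iff outer_def matrix_vector_mult_def inner_vec_def sum_distrib_left mult_ac)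

lemma outer_scaleL: "outer ((c::real) *\<^sub>R u) v = c *\<^sub>R outer u v"
  by (simp add: vec_eq_iff outer_def mult_ac)

lemma SM:
  fixes M :: "real^'c::finite^'c"
  assumes sym: "transpose M = M" and pd: "\<forall>x. x \<noteq> 0 \<longrightarrow> x \<bullet> (M *v x) > 0"
    and s2: "s2 > 0" and a: "a \<noteq> 0"
  defines "S \<equiv> matrix_inv M"
  defines "u \<equiv> S *v a"
  shows "M ** S = mat 1" "a \<bullet> u > 0"
    "matrix_inv (M + (1/s2) *\<^sub>R outer a a) = S + (- (1 / (s2 + a \<bullet> u))) *\<^sub>R outer u u"
proof -
  have "\<forall>x. M *v x = 0 \<longrightarrow> x = 0" using pd by force
  then obtain B where "B ** M = mat 1" using matrix_left_invertible_ker by blast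
  then have "M ** B = mat 1" using matrix_left_right_inverse by blast
  then show MS: "M ** S = mat 1" unfolding S_def using inv_unique by metis
  have "transpose S ** M = mat 1"
    by (metis MS matrix_transpose_mul sym transpose_mat)
  then have symS: "transpose S = S"
    by (metis MS matrix_mul_assoc matrix_mul_lid matrix_mul_rid)
  have Mu: "M *v u = a" unfolding u_def by (simp add: matrix_vector_mul_assoc MS)
  have "u \<noteq> 0" using Mu a by auto
  then have "u \<bullet> (M *v u) > 0" using pd by blast
  then show au: "a \<bullet> u > 0" using Mu by (simp add: inner_commute)
  define c where "c = 1 / (s2 + a \<bullet> u)"
  define k where "k = 1 / s2"
  define nc where "nc = - c"
  have aS: "a v* S = u" by (metis symS transpose_matrix_vector u_def)
  have coef: "k + nc + nc * k * (a \<bullet> u) = 0"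
    using s2 au unfolding nc_def c_def k_def by (simp add: field_simps)
  have "(M + k *\<^sub>R outer a a) ** (S + nc *\<^sub>R outer u u)
      = M ** S + (k *\<^sub>R outer a a) ** S + (M ** (nc *\<^sub>R outer u u) + (k *\<^sub>R outer a a) ** (nc *\<^sub>R outer u u))"
    by (simp only: matrix_add_ldistrib matrix_add_rdistrib)
  also have "\<dots> = mat 1 + k *\<^sub>R outer a u + (nc *\<^sub>R outer a u + (nc * k * (a \<bullet> u)) *\<^sub>R outer a u)"
    by (simp add: MS matrix_scalar_ac scalar_matrix_assoc[symmetric] outer_l outer_r outer_mv scaleR_mv outer_scaleL Mu aS mult_ac)
  also have "\<dots> = mat 1 + (k + nc + nc * k * (a \<bullet> u)) *\<^sub>R outer a u"
    by (simp add: algebra_simps)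
  also have "\<dots> = mat 1" using coef by simp
  finally show "matrix_inv (M + (1/s2) *\<^sub>R outer a a) = S + (- (1 / (s2 + a \<bullet> u))) *\<^sub>R outer u u"
    unfolding nc_def c_def k_def by (rule inv_unique)
qed


lemma trace_scaleR: "trace ((c::real) *\<^sub>R (A::real^'a::finite^'a)) = c * trace A"
  by (simp add: trace_def sum_distrib_left)

definition gd :: "real \<Rightarrow> ('m::finite \<Rightarrow> real) \<Rightarrow> unit + ('m + 'm) \<Rightarrow> real" where
  "gd \<alpha>0 \<alpha> c = (case c of Inl _ \<Rightarrow> \<alpha>0 | Inr (Inl m) \<Rightarrow> \<alpha> m | Inr (Inr m) \<Rightarrow> \<alpha> m)"

lemma Gamma_diagm: "Gamma \<alpha>0 \<alpha> = diagm (gd \<alpha>0 \<alpha>)"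
  unfolding Gamma_def diagm_def gd_def by simp

lemma gd_pos: "\<alpha>0 > 0 \<Longrightarrow> \<forall>m. \<alpha> m > 0 \<Longrightarrow> gd \<alpha>0 \<alpha> c > 0"
  unfolding gd_def by (auto split: sum.splits)

lemma Gamma_inv:
  assumes "\<alpha>0 > 0" "\<forall>m. \<alpha> m > 0"
  shows "matrix_inv (Gamma \<alpha>0 \<alpha>) = diagm (\<lambda>c. 1 / gd \<alpha>0 \<alpha> c)"
proof (rule inv_unique)
  have "(\<lambda>c. gd \<alpha>0 \<alpha> c * (1 / gd \<alpha>0 \<alpha> c)) = (\<lambda>c. 1)"
    using gd_pos[OF assms] by (simp add: less_imp_neq[symmetric] fun_eq_iff)
  then show "Gamma \<alpha>0 \<alpha> ** diagm (\<lambda>c. 1 / gd \<alpha>0 \<alpha> c) = mat 1"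
    by (simp add: Gamma_diagm diagm_mult diagm_1)
qed

lemma Mmat_sym:
  fixes A :: "real^'c::finite^'n::finite"
  shows "transpose ((1/s2) *\<^sub>R (transpose A ** Pmat J ** A) + diagm h)
       = (1/s2) *\<^sub>R (transpose A ** Pmat J ** A) + diagm h"
  by (simp add: vec_eq_iff transpose_entry AtPA_entry diagm_def mult.commute)

lemma Mmat_pd:
  fixes A :: "real^'c::finite^'n::finite"
  assumes "s2 > 0" "\<forall>c. h c > 0" "x \<noteq> 0"
  shows "x \<bullet> (((1/s2) *\<^sub>R (transpose A ** Pmat J ** A) + diagm h) *v x) > 0"
proof -
  have "x \<bullet> (((1/s2) *\<^sub>R (transpose A ** Pmat J ** A) + diagm h) *v x)
     = (1/s2) * (x \<bullet> ((transpose A ** Pmat J ** A) *v x)) + x \<bullet> (diagm h *v x)"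
    by (simp add: matrix_vector_mult_add_rdistrib scaleR_mv inner_add_right)
  moreover have "(1/s2) * (x \<bullet> ((transpose A ** Pmat J ** A) *v x)) \<ge> 0"
    using assms(1) AtPA_quad[of x A J] by simp
  moreover have "x \<bullet> (diagm h *v x) > 0" using diagm_pos assms by blast
  ultimately show ?thesis by linarith
qed

lemma fobj_alt:
  assumes "\<alpha>0 > 0" "\<forall>m. \<alpha> m > 0"
  shows "fobj t fr \<sigma>2 \<alpha>0 \<alpha> J =
     trace (\<sigma>2 *\<^sub>R mat 1 + Amat t fr ** Gamma \<alpha>0 \<alpha> ** transpose (Amat t fr))
   - trace (\<sigma>2 *\<^sub>R mat 1 + Amat t fr **
        matrix_inv ((1 / \<sigma>2) *\<^sub>R (transpose (Amat t fr) ** Pmat J ** Amat t fr)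
                    + diagm (\<lambda>c. 1 / gd \<alpha>0 \<alpha> c)) ** transpose (Amat t fr))"
  unfolding fobj_def Gamma_inv[OF assms] ..

lemma Amat_row_nz: "Amat t fr $ i \<noteq> 0"
proof
  assume "Amat t fr $ i = 0"
  then have "Amat t fr $ i $ Inl () = 0" by simp
  then show False by (simp add: Amat_def)
qed

lemma marginal_pos:
  assumes s: "\<sigma>2 > 0" and a0: "\<alpha>0 > 0" and al: "\<forall>m. \<alpha> m > 0" and i: "i \<notin> J"
  shows "marginal (fobj t fr \<sigma>2 \<alpha>0 \<alpha>) i J > 0"
proof -
  let ?A = "Amat t fr"
  let ?h = "\<lambda>c. 1 / gd \<alpha>0 \<alpha> c"
  define M where "M = (1 / \<sigma>2) *\<^sub>R (transpose ?A ** Pmat J ** ?A) + diagm ?h"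
  define a where "a = ?A $ i"
  define S where "S = matrix_inv M"
  define u where "u = S *v a"
  define c where "c = 1 / (\<sigma>2 + a \<bullet> u)"
  have hpos: "\<forall>c. ?h c > 0" using gd_pos[OF a0 al] by simp
  have sym: "transpose M = M" unfolding M_def by (rule Mmat_sym)
  have pd: "\<forall>x. x \<noteq> 0 \<longrightarrow> x \<bullet> (M *v x) > 0" unfolding M_def using Mmat_pd[OF s hpos] by blast
  have anz: "a \<noteq> 0" unfolding a_def by (rule Amat_row_nz)
  note SMr = SM[OF sym pd s anz]
  have au: "a \<bullet> u > 0" using SMr(2) unfolding u_def S_def .
  have M': "(1 / \<sigma>2) *\<^sub>R (transpose ?A ** Pmat (insert i J) ** ?A) + diagm ?h
        = M + (1/\<sigma>2) *\<^sub>R outer a a"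
    unfolding M_def a_def AtPA_insert[OF i] by (simp add: algebra_simps)
  have S': "matrix_inv (M + (1/\<sigma>2) *\<^sub>R outer a a) = S + (- c) *\<^sub>R outer u u"
    using SMr(3) unfolding c_def u_def S_def .
  have AOA: "?A ** outer u u ** transpose ?A = outer (?A *v u) (?A *v u)"
    by (simp add: outer_l outer_r)
  have e: "?A ** (S + (- c) *\<^sub>R outer u u) ** transpose ?A
      = ?A ** S ** transpose ?A + (- c) *\<^sub>R outer (?A *v u) (?A *v u)"
    by (simp only: matrix_add_ldistrib matrix_add_rdistrib matrix_scalar_ac scalar_matrix_assoc[symmetric] AOA)
  have "marginal (fobj t fr \<sigma>2 \<alpha>0 \<alpha>) i J
     = trace (\<sigma>2 *\<^sub>R mat 1 + ?A ** S ** transpose ?A)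
       - trace (\<sigma>2 *\<^sub>R mat 1 + ?A ** (S + (- c) *\<^sub>R outer u u) ** transpose ?A)"
  proof -
    have f1: "fobj t fr \<sigma>2 \<alpha>0 \<alpha> (insert i J) = trace (\<sigma>2 *\<^sub>R mat 1 + ?A ** Gamma \<alpha>0 \<alpha> ** transpose ?A)
       - trace (\<sigma>2 *\<^sub>R mat 1 + ?A ** (S + (- c) *\<^sub>R outer u u) ** transpose ?A)"
      using fobj_alt[OF a0 al, of t fr \<sigma>2 "insert i J"]
      unfolding M' S' .
    have f0: "fobj t fr \<sigma>2 \<alpha>0 \<alpha> J = trace (\<sigma>2 *\<^sub>R mat 1 + ?A ** Gamma \<alpha>0 \<alpha> ** transpose ?A)
       - trace (\<sigma>2 *\<^sub>R mat 1 + ?A ** S ** transpose ?A)"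
      using fobj_alt[OF a0 al, of t fr \<sigma>2 J]
      unfolding M_def[symmetric] S_def[symmetric] .
    have "J \<union> {i} = insert i J" by simp
    then show ?thesis unfolding marginal_def using f0 f1 by simp
  qed
  also have "\<dots> = c * ((?A *v u) \<bullet> (?A *v u))"
    unfolding e by (simp add: trace_add trace_sub trace_scaleR trace_outer add.assoc[symmetric])
  finally have mg: "marginal (fobj t fr \<sigma>2 \<alpha>0 \<alpha>) i J = c * ((?A *v u) \<bullet> (?A *v u))" .
  have "(?A *v u) $ i = a \<bullet> u" by (simp add: matrix_vector_mul_component a_def)
  then have "?A *v u \<noteq> 0" using au by auto
  then have "(?A *v u) \<bullet> (?A *v u) > 0" by simp
  moreover have "c > 0" unfolding c_def using s au by simp
  ultimately show ?thesis using mg by simp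
qed


lemma fobj_mono_aux:
  assumes s: "\<sigma>2 > 0" and a0: "\<alpha>0 > 0" and al: "\<forall>m. \<alpha> m > 0"
  shows "finite F \<Longrightarrow> fobj t fr \<sigma>2 \<alpha>0 \<alpha> X \<le> fobj t fr \<sigma>2 \<alpha>0 \<alpha> (X \<union> F)"
proof (induction F rule: finite_induct)
  case empty
  then show ?case by simp
next
  case (insert x F)
  show ?case
  proof (cases "x \<in> X \<union> F")
    case True
    then have "X \<union> insert x F = X \<union> F" by auto
    then show ?thesis using insert.IH by simp
  next
    case False
    have "marginal (fobj t fr \<sigma>2 \<alpha>0 \<alpha>) x (X \<union> F) > 0"
      using marginal_pos[OF s a0 al False] .
    moreover have "X \<union> insert x F = (X \<union> F) \<union> {x}" by auto
    ultimately show ?thesis using insert.IH unfolding marginal_def by simp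
  qed
qed

theorem theorem1:
  fixes t :: "'n::finite \<Rightarrow> real" and fr :: "'m::finite \<Rightarrow> real"
    and \<sigma>2 :: real and \<alpha>0 :: real and \<alpha> :: "'m \<Rightarrow> real"
  assumes "\<sigma>2 > 0" and "\<alpha>0 > 0" and "\<forall>m. \<alpha> m > 0"
  shows "weakly_submodular (UNIV :: 'n set) (fobj t fr \<sigma>2 \<alpha>0 \<alpha>)"
proof -
  let ?f = "fobj t fr \<sigma>2 \<alpha>0 \<alpha>"
  have mono: "\<forall>X Y. X \<subseteq> Y \<and> Y \<subseteq> (UNIV :: 'n set) \<longrightarrow> ?f X \<le> ?f Y"
  proof (intro allI impI)
    fix X Y :: "'n set" assume "X \<subseteq> Y \<and> Y \<subseteq> UNIV"
    then have "Y = X \<union> (Y - X)" by auto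
    then show "?f X \<le> ?f Y" using fobj_mono_aux[OF assms, where F="Y - X" and X=X and t=t and fr=fr] by simp
  qed
  have nz: "\<forall>(X, Y, i) \<in> wsm_triples (UNIV :: 'n set). marginal ?f i X \<noteq> 0"
  proof (clarsimp simp: wsm_triples_def)
    fix X Y :: "'n set" and i
    assume "X \<subseteq> Y" "i \<notin> Y" "marginal ?f i X = 0"
    moreover have "i \<notin> X" using \<open>X \<subseteq> Y\<close> \<open>i \<notin> Y\<close> by auto
    ultimately show False using marginal_pos[OF assms] by (metis less_irrefl)
  qed
  let ?T = "wsm_triples (UNIV :: 'n set)"
  let ?g = "\<lambda>(X, Y, i). marginal ?f i Y / marginal ?f i X"
  have fin: "finite ?T" by simp
  have "\<forall>(X, Y, i) \<in> ?T. marginal ?f i Y / marginal ?f i X \<le> Max (?g ` ?T)"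
  proof (clarify)
    fix X Y i assume "(X, Y, i) \<in> ?T"
    then have "?g (X, Y, i) \<in> ?g ` ?T" by (rule imageI)
    then have "?g (X, Y, i) \<le> Max (?g ` ?T)" using fin by (intro Max_ge) auto
    then show "marginal ?f i Y / marginal ?f i X \<le> Max (?g ` ?T)" by simp
  qed
  then have bd: "\<exists>c::real. \<forall>(X, Y, i) \<in> ?T. marginal ?f i Y / marginal ?f i X \<le> c" by blast
  show ?thesis unfolding weakly_submodular_def using mono nz bd by blast
qed

end
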